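(* Let $G$ be a graph and let $\{A,B\}$ be a near partition of $V(G)$ (i.e. $A\cap B=\emptyset$, $A\cup B=V(G)$, with $A$ or $B$ possibly empty). Then $$\mathrm{cmp}(G)\le \max\{\mathrm{cmp}(G[A]),\mathrm{cmp}(G[B])\}+|N_G(B)|.$$
   Context: All graphs are finite and simple. $G[X]$ is the induced subgraph on $X$, and $N_G(X)$ is the set of vertices outside $X$ having a neighbor in $X$. A forest decomposition of a graph $G$ is a pair $(F,(W_x)_{x\in V(F)})$ where $F$ is a forest and $W_x\subseteq V(G)$, such that (1) for every vertex $u$ of $G$, $\{x\in V(F)\mid u\in W_x\}$ induces a nonempty connected subgraph of $F$, and (2) every edge $uv$ of $G$ has both ends in some bag $W_x$. Its width is the maximum size of a bag minus one. It is suitable if additionally (3) $F$ is a subgraph of $G$ with $V(F)=V(G)$, and (4) $u\in W_u$ for every $u\in V(G)$. Every graph has a suitable forest decomposition. The complexity $\mathrm{cmp}(G)$ is the minimum width of a suitable forest decomposition of $G$, with the convention $\mathrm{cmp}(G)=0$ if $G$ has no vertices. *)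

theory Defs
  imports Main
begin

definition graph :: "'a set \<Rightarrow> 'a set set \<Rightarrow> bool" where
  "graph V E \<longleftrightarrow> finite V \<and>
     (\<forall>e\<in>E. \<exists>u v. u \<noteq> v \<and> e = {u, v} \<and> u \<in> V \<and> v \<in> V)"

definition induced_edges :: "'a set set \<Rightarrow> 'a set \<Rightarrow> 'a set set" where
  "induced_edges E X = {e \<in> E. e \<subseteq> X}"

definition nbhd :: "'a set \<Rightarrow> 'a set set \<Rightarrow> 'a set \<Rightarrow> 'a set" where
  "nbhd V E X = {v \<in> V - X. \<exists>u\<in>X. {u, v} \<in> E}"

definition is_cycle :: "'a set set \<Rightarrow> 'a list \<Rightarrow> bool" where
  "is_cycle E vs \<longleftrightarrow> distinct vs \<and> length vs \<ge> 3 \<and>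
     (\<forall>i < length vs. {vs ! i, vs ! ((i + 1) mod length vs)} \<in> E)"

definition forest :: "'a set \<Rightarrow> 'a set set \<Rightarrow> bool" where
  "forest V E \<longleftrightarrow> graph V E \<and> (\<nexists>vs. is_cycle E vs)"

definition connected_in :: "'a set set \<Rightarrow> 'a set \<Rightarrow> bool" where
  "connected_in E X \<longleftrightarrow>
     (\<forall>x\<in>X. \<forall>y\<in>X. (\<lambda>a b. a \<in> X \<and> b \<in> X \<and> {a, b} \<in> E)\<^sup>*\<^sup>* x y)"

definition suitable_fd :: "'a set \<Rightarrow> 'a set set \<Rightarrow> 'a set set \<Rightarrow> ('a \<Rightarrow> 'a set) \<Rightarrow> bool" where
  "suitable_fd V E EF W \<longleftrightarrow>
     forest V EF \<and> EF \<subseteq> E \<and>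
     (\<forall>x\<in>V. W x \<subseteq> V) \<and>
     (\<forall>u\<in>V. {x \<in> V. u \<in> W x} \<noteq> {} \<and> connected_in EF {x \<in> V. u \<in> W x}) \<and>
     (\<forall>e\<in>E. \<exists>x\<in>V. e \<subseteq> W x) \<and>
     (\<forall>u\<in>V. u \<in> W u)"

definition fd_width :: "'a set \<Rightarrow> ('a \<Rightarrow> 'a set) \<Rightarrow> nat" where
  "fd_width V W = Max ((\<lambda>x. card (W x)) ` V) - 1"

definition cmp :: "'a set \<Rightarrow> 'a set set \<Rightarrow> nat" where
  "cmp V E = (if V = {} then 0 else
     (LEAST k. \<exists>EF W. suitable_fd V E EF W \<and> fd_width V W = k))"

end

theory Submission
  imports Defs
begin

definition conn :: "'a set set \<Rightarrow> 'a \<Rightarrow> 'a \<Rightarrow> bool" where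
  "conn F = (\<lambda>a b. {a, b} \<in> F)\<^sup>*\<^sup>*"

lemma rtranclp_sym_gen:
  assumes "\<And>a b. R a b \<Longrightarrow> R b a" "R\<^sup>*\<^sup>* x y"
  shows "R\<^sup>*\<^sup>* y x"
  using assms(2)
proof (induction rule: rtranclp_induct)
  case base then show ?case by simp
next
  case (step y z)
  then show ?case using assms(1) converse_rtranclp_into_rtranclp by metis
qed

lemma conn_sym: "conn F x y \<Longrightarrow> conn F y x"
  unfolding conn_def by (rule rtranclp_sym_gen) (auto simp: insert_commute)

lemma conn_edge: "{x, y} \<in> F \<Longrightarrow> conn F x y"
  unfolding conn_def by (rule r_into_rtranclp) simp

lemma conn_mono: "conn F x y \<Longrightarrow> F \<subseteq> F' \<Longrightarrow> conn F' x y"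
  unfolding conn_def by (erule rtranclp_mono[THEN predicate2D, rotated]) auto

lemma restricted_conn:
  "(\<lambda>a b. a \<in> X \<and> b \<in> X \<and> {a, b} \<in> F)\<^sup>*\<^sup>* x y \<Longrightarrow> conn F x y"
  unfolding conn_def by (erule rtranclp_mono[THEN predicate2D, rotated]) auto

lemma connected_in_mono: "connected_in F X \<Longrightarrow> F \<subseteq> F' \<Longrightarrow> connected_in F' X"
  unfolding connected_in_def
proof (intro ballI)
  fix x y assume "\<forall>x\<in>X. \<forall>y\<in>X. (\<lambda>a b. a \<in> X \<and> b \<in> X \<and> {a, b} \<in> F)\<^sup>*\<^sup>* x y"
    "F \<subseteq> F'" "x \<in> X" "y \<in> X"
  then have "(\<lambda>a b. a \<in> X \<and> b \<in> X \<and> {a, b} \<in> F)\<^sup>*\<^sup>* x y" by blast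
  then show "(\<lambda>a b. a \<in> X \<and> b \<in> X \<and> {a, b} \<in> F')\<^sup>*\<^sup>* x y"
    by (rule rtranclp_mono[THEN predicate2D, rotated]) (use \<open>F \<subseteq> F'\<close> in auto)
qed

lemma graph_edge_ex:
  assumes "graph V E" "e \<in> E"
  shows "\<exists>u v. u \<noteq> v \<and> e = {u, v} \<and> u \<in> V \<and> v \<in> V"
  using conjunct2[OF assms(1)[unfolded graph_def]] assms(2) by (rule bspec)

lemma graph_edge:
  assumes "graph V E" "{x, y} \<in> E"
  shows "x \<in> V \<and> y \<in> V \<and> x \<noteq> y"
proof -
  obtain u v where uv: "u \<noteq> v" "{x, y} = {u, v}" "u \<in> V" "v \<in> V"
    using graph_edge_ex[OF assms] by (elim exE conjE) (rule that)
  from uv(2) have "(x = u \<and> y = v) \<or> (x = v \<and> y = u)" unfolding doubleton_eq_iff .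
  then show ?thesis using uv(1,3,4) by (elim disjE conjE) simp_all
qed

lemma graph_edge_sub: "graph V E \<Longrightarrow> e \<in> E \<Longrightarrow> e \<subseteq> V"
proof -
  assume a: "graph V E" "e \<in> E"
  obtain u v where uv: "e = {u, v}" "u \<in> V" "v \<in> V"
    using graph_edge_ex[OF a] by (elim exE conjE) (rule that)
  then show "e \<subseteq> V" by simp
qed

lemma graph_finite_E: "graph V E \<Longrightarrow> finite E"
proof -
  assume g: "graph V E"
  then have "E \<subseteq> Pow V" using graph_edge_sub by blast
  moreover have "finite V" using g unfolding graph_def by simp
  ultimately show "finite E" using finite_subset by (metis finite_Pow_iff)
qed

lemma path_around:
  assumes "\<forall>j<n. j \<noteq> i \<longrightarrow> {vs!j, vs!((j+1) mod n)} \<in> F" "i < n" "k < n"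
  shows "conn F (vs!((i+1) mod n)) (vs!((i+1+k) mod n))"
  using assms(3)
proof (induction k)
  case 0 then show ?case by (simp add: conn_def)
next
  case (Suc k)
  define j where "j = (i+1+k) mod n"
  have jn: "j < n" using assms(2) j_def by simp
  have "j \<noteq> i"
  proof
    assume "j = i"
    show False
    proof (cases "i+1+k < n")
      case True then show False using \<open>j = i\<close> j_def by simp
    next
      case False
      then have "(i+1+k) mod n = (i+1+k-n) mod n" by (simp add: le_mod_geq)
      moreover have "i+1+k-n < n" using Suc.prems assms(2) by simp
      ultimately have "j = i+1+k-n" using j_def by simp
      then show False using \<open>j = i\<close> Suc.prems False by linarith
    qed
  qed
  then have e: "{vs!j, vs!((j+1) mod n)} \<in> F" using assms(1) jn by blast
  have "(j+1) mod n = (i+1+Suc k) mod n" unfolding j_def by (simp add: mod_Suc_eq)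
  then have "conn F (vs!j) (vs!((i+1+Suc k) mod n))" using conn_edge e by metis
  moreover have "conn F (vs!((i+1) mod n)) (vs!j)" using Suc j_def by simp
  ultimately show ?case unfolding conn_def by (meson rtranclp_trans)
qed


lemma cycle_edge_in:
  assumes "is_cycle E vs" "i < length vs"
  shows "{vs!i, vs!((i+1) mod length vs)} \<in> E"
  using assms unfolding is_cycle_def by blast

lemma forest_add_edge:
  assumes f: "forest V F" and ab: "a \<in> V" "b \<in> V" "a \<noteq> b" and nc: "\<not> conn F a b"
  shows "forest V (insert {a, b} F)"
proof -
  have gF: "graph V F" using f unfolding forest_def by simp
  have g: "graph V (insert {a, b} F)"
    unfolding graph_def
  proof (intro conjI ballI)
    show "finite V" using gF unfolding graph_def by simp
    fix e assume e: "e \<in> insert {a, b} F"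
    show "\<exists>u v. u \<noteq> v \<and> e = {u, v} \<and> u \<in> V \<and> v \<in> V"
    proof (cases "e = {a, b}")
      case True then show ?thesis using ab by blast
    next
      case False then have "e \<in> F" using e by simp
      then show ?thesis using graph_edge_ex[OF gF] by blast
    qed
  qed
  have "\<nexists>vs. is_cycle (insert {a, b} F) vs"
  proof
    assume "\<exists>vs. is_cycle (insert {a, b} F) vs"
    then obtain vs where c: "is_cycle (insert {a, b} F) vs" by blast
    define n where "n = length vs"
    have n3: "n \<ge> 3" and dist: "distinct vs" using c unfolding is_cycle_def n_def by auto
    show False
    proof (cases "\<forall>i<n. {vs!i, vs!((i+1) mod n)} \<in> F")
      case True
      then have "is_cycle F vs" using c unfolding is_cycle_def n_def by blast
      then show False using f unfolding forest_def by blast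
    next
      case False
      then obtain i where i: "i < n" "{vs!i, vs!((i+1) mod n)} \<notin> F" by blast
      have "{vs!i, vs!((i+1) mod n)} \<in> insert {a, b} F"
        using cycle_edge_in[OF c] i(1) n_def by simp
      then have ei: "{vs!i, vs!((i+1) mod n)} = {a, b}"
        using i(2) by simp
      have others: "\<forall>j<n. j \<noteq> i \<longrightarrow> {vs!j, vs!((j+1) mod n)} \<in> F"
      proof (intro allI impI)
        fix j assume j: "j < n" "j \<noteq> i"
        have ins: "{vs!j, vs!((j+1) mod n)} \<in> insert {a, b} F"
          using cycle_edge_in[OF c, of j] j(1) n_def by simp
        show "{vs!j, vs!((j+1) mod n)} \<in> F"
        proof (rule ccontr)
          assume "{vs!j, vs!((j+1) mod n)} \<notin> F"
          then have "{vs!j, vs!((j+1) mod n)} = {vs!i, vs!((i+1) mod n)}" using ins ei by simp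
          moreover have jn1: "(j+1) mod n < n" "(i+1) mod n < n" using n3 by auto
          have eqv: "\<And>p q. p < n \<Longrightarrow> q < n \<Longrightarrow> (vs!p = vs!q) = (p = q)"
            using nth_eq_iff_index_eq[OF dist] n_def by simp
          have "vs!j \<noteq> vs!i" using eqv[OF j(1) i(1)] j(2) by blast
          then have "vs!j = vs!((i+1) mod n) \<and> vs!((j+1) mod n) = vs!i"
            using \<open>{vs!j, vs!((j+1) mod n)} = {vs!i, vs!((i+1) mod n)}\<close>
            unfolding doubleton_eq_iff by blast
          then have jeq: "j = (i+1) mod n" and jeq2: "(j+1) mod n = i"
            using eqv[OF j(1) jn1(2)] eqv[OF jn1(1) i(1)] by blast+
          show False
          proof (cases "i+1 < n")
            case True
            then have "j = i+1" using jeq by simp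
            then have "(i+2) mod n = i" using jeq2 by simp
            show False
            proof (cases "i+2 < n")
              case True then show False using \<open>(i+2) mod n = i\<close> by simp
            next
              case False
              then have "i+2 = n" using \<open>i+1 < n\<close> by simp
              then have "(i+2) mod n = 0" by simp
              then show False using \<open>(i+2) mod n = i\<close> \<open>i+2 = n\<close> n3 by simp
            qed
          next
            case False
            then have "i+1 = n" using i(1) by simp
            then have "j = 0" using jeq by simp
            then have "1 mod n = i" using jeq2 by simp
            then show False using n3 \<open>i+1 = n\<close> by simp
          qed
        qed
      qed
      have n1: "n - 1 < n" using n3 by simp
      have "conn F (vs!((i+1) mod n)) (vs!((i+1+(n-1)) mod n))"
        by (rule path_around[OF others i(1) n1])
      moreover have "i+1+(n-1) = i + n" using n3 by simp
      then have "(i+1+(n-1)) mod n = i" using i(1) by simp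
      ultimately have "conn F (vs!((i+1) mod n)) (vs!i)" by metis
      then have c2: "conn F (vs!i) (vs!((i+1) mod n))" by (rule conn_sym)
      have "(vs!i = a \<and> vs!((i+1) mod n) = b) \<or> (vs!i = b \<and> vs!((i+1) mod n) = a)"
        using ei unfolding doubleton_eq_iff .
      then show False
      proof
        assume "vs!i = a \<and> vs!((i+1) mod n) = b"
        then show False using c2 nc by simp
      next
        assume "vs!i = b \<and> vs!((i+1) mod n) = a"
        then show False using \<open>conn F (vs!((i+1) mod n)) (vs!i)\<close> nc by simp
      qed
    qed
  qed
  then show ?thesis using g unfolding forest_def by blast
qed

lemma extend_forest:
  assumes "finite E" "forest V F" "F \<subseteq> E" "graph V E"
  shows "\<exists>F'. forest V F' \<and> F \<subseteq> F' \<and> F' \<subseteq> E \<and> (\<forall>x y. {x, y} \<in> E \<longrightarrow> conn F' x y)"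
  using assms
proof (induction "card (E - F)" arbitrary: F rule: less_induct)
  case less
  show ?case
  proof (cases "\<forall>x y. {x, y} \<in> E \<longrightarrow> conn F x y")
    case True then show ?thesis using less.prems by (intro exI[of _ F]) simp
  next
    case False
    then have "\<exists>x y. {x, y} \<in> E \<and> \<not> conn F x y" by simp
    then obtain x y where xy: "{x, y} \<in> E" "\<not> conn F x y" by (elim exE conjE) (rule that)
    have xv: "x \<in> V" "y \<in> V" "x \<noteq> y" using graph_edge[OF less.prems(4) xy(1)] by simp_all
    have fo: "forest V (insert {x, y} F)" by (rule forest_add_edge[OF less.prems(2) xv xy(2)])
    have nf: "{x, y} \<notin> F" using xy(2) conn_edge[of x y F] by blast
    have ed: "E - insert {x, y} F = (E - F) - {{x, y}}" by (rule Diff_insert)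
    have "{x, y} \<in> E - F" using nf xy(1) by simp
    then have "card ((E - F) - {{x, y}}) < card (E - F)"
      using less.prems(1) by (intro card_Diff1_less) simp_all
    then have lt: "card (E - insert {x, y} F) < card (E - F)" using ed by simp
    have sub: "insert {x, y} F \<subseteq> E" using xy(1) less.prems(3) by simp
    have "\<exists>F'. forest V F' \<and> insert {x, y} F \<subseteq> F' \<and> F' \<subseteq> E \<and> (\<forall>x y. {x, y} \<in> E \<longrightarrow> conn F' x y)"
      by (rule less.hyps[OF lt less.prems(1) fo sub less.prems(4)])
    then obtain F' where a: "forest V F'" "insert {x, y} F \<subseteq> F'" "F' \<subseteq> E" "\<forall>x y. {x, y} \<in> E \<longrightarrow> conn F' x y"
      by (elim exE conjE) (rule that)
    show ?thesis using a by (intro exI[of _ F']) simp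
  qed
qed

lemma cycle_side:
  assumes c: "is_cycle (FA \<union> FB) vs" and sa: "\<forall>e\<in>FA. e \<subseteq> A" and sb: "\<forall>e\<in>FB. e \<subseteq> B"
    and d: "A \<inter> B = {}" and v0: "vs!0 \<in> A"
  shows "is_cycle FA vs"
proof -
  define n where "n = length vs"
  have n3: "n \<ge> 3" using c unfolding is_cycle_def n_def by auto
  have E: "\<And>i. i < n \<Longrightarrow> {vs!i, vs!((i+1) mod n)} \<in> FA \<union> FB"
    using cycle_edge_in[OF c] n_def by blast
  have allA: "\<forall>k<n. vs!k \<in> A"
  proof (intro allI impI)
    fix k assume "k < n"
    then show "vs!k \<in> A"
    proof (induction k)
      case 0 then show ?case using v0 by simp
    next
      case (Suc k)
      then have e: "{vs!k, vs!(Suc k)} \<in> FA \<union> FB" using E[of k] by simp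
      have "vs!k \<in> A" using Suc by simp
      then have "{vs!k, vs!(Suc k)} \<notin> FB" using sb d by blast
      then show ?case using e sa by blast
    qed
  qed
  have "\<forall>i<n. {vs!i, vs!((i+1) mod n)} \<in> FA"
  proof (intro allI impI)
    fix i assume i: "i < n"
    then have "vs!i \<in> A" using allA by blast
    then have "{vs!i, vs!((i+1) mod n)} \<notin> FB" using sb d by blast
    then show "{vs!i, vs!((i+1) mod n)} \<in> FA" using E[OF i] by blast
  qed
  then show ?thesis using c unfolding is_cycle_def n_def by blast
qed

lemma forest_union:
  assumes fa: "forest A FA" and fb: "forest B FB" and d: "A \<inter> B = {}"
  shows "forest (A \<union> B) (FA \<union> FB)"
proof -
  have sa: "\<forall>e\<in>FA. e \<subseteq> A" using fa graph_edge_sub unfolding forest_def by blast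
  have sb: "\<forall>e\<in>FB. e \<subseteq> B" using fb graph_edge_sub unfolding forest_def by blast
  have ga: "graph A FA" and gb: "graph B FB" using fa fb unfolding forest_def by auto
  have "\<forall>e\<in>FA \<union> FB. \<exists>u v. u \<noteq> v \<and> e = {u, v} \<and> u \<in> A \<union> B \<and> v \<in> A \<union> B"
  proof
    fix e assume "e \<in> FA \<union> FB"
    then show "\<exists>u v. u \<noteq> v \<and> e = {u, v} \<and> u \<in> A \<union> B \<and> v \<in> A \<union> B"
    proof
      assume "e \<in> FA"
      then have "\<exists>u v. u \<noteq> v \<and> e = {u, v} \<and> u \<in> A \<and> v \<in> A" using graph_edge_ex[OF ga] by blast
      then show ?thesis by (elim exE conjE) (intro exI conjI, assumption+, simp_all)
    next
      assume "e \<in> FB"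
      then have "\<exists>u v. u \<noteq> v \<and> e = {u, v} \<and> u \<in> B \<and> v \<in> B" using graph_edge_ex[OF gb] by blast
      then show ?thesis by (elim exE conjE) (intro exI conjI, assumption+, simp_all)
    qed
  qed
  moreover have "finite (A \<union> B)" using ga gb unfolding graph_def by simp
  ultimately have g: "graph (A \<union> B) (FA \<union> FB)" unfolding graph_def by (intro conjI)
  have "\<nexists>vs. is_cycle (FA \<union> FB) vs"
  proof
    assume "\<exists>vs. is_cycle (FA \<union> FB) vs"
    then obtain vs where c: "is_cycle (FA \<union> FB) vs" by blast
    have "length vs > 0" using c unfolding is_cycle_def by auto
    then have "{vs!0, vs!((0+1) mod length vs)} \<in> FA \<union> FB" using cycle_edge_in[OF c] by blast
    then have "vs!0 \<in> A \<or> vs!0 \<in> B" using sa sb by blast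
    then show False
    proof
      assume "vs!0 \<in> A"
      then have "is_cycle FA vs" using cycle_side[OF c sa sb d] by blast
      then show False using fa unfolding forest_def by blast
    next
      assume "vs!0 \<in> B"
      moreover have "is_cycle (FB \<union> FA) vs" using c by (simp add: Un_commute)
      moreover have "B \<inter> A = {}" using d by blast
      ultimately have "is_cycle FB vs" using cycle_side[of FB FA vs B A] sa sb by blast
      then show False using fb unfolding forest_def by blast
    qed
  qed
  then show ?thesis using g unfolding forest_def by blast
qed


lemma comp_connected:
  assumes g: "graph V F"
  shows "connected_in F {x \<in> V. conn F x u}"
proof -
  define C where "C = {x \<in> V. conn F x u}"
  define R where "R = (\<lambda>a b. a \<in> C \<and> b \<in> C \<and> {a, b} \<in> F)"
  have toU: "R\<^sup>*\<^sup>* x u" if "conn F x u" for x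
    using that unfolding conn_def
  proof (induction rule: converse_rtranclp_induct)
    case base then show ?case by simp
  next
    case (step x y)
    have xy: "x \<in> V" "y \<in> V" using graph_edge[OF g step(1)] by auto
    have cy: "conn F y u" using step(2) unfolding conn_def .
    have cx: "conn F x u" unfolding conn_def
      using converse_rtranclp_into_rtranclp[of "\<lambda>a b. {a, b} \<in> F" x y u] step(1,2) by simp
    have "R x y" unfolding R_def C_def using xy step(1) cx cy by simp
    then show ?case using converse_rtranclp_into_rtranclp[of R x y u] step(3) by simp
  qed
  have symR: "\<And>a b. R a b \<Longrightarrow> R b a" unfolding R_def by (auto simp: insert_commute)
  show ?thesis
    unfolding connected_in_def C_def[symmetric] R_def[symmetric]
  proof (intro ballI)
    fix x y assume "x \<in> C" "y \<in> C"
    then have hx: "R\<^sup>*\<^sup>* x u" and hy: "R\<^sup>*\<^sup>* y u" using toU unfolding C_def by auto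
    show "R\<^sup>*\<^sup>* x y" by (rule rtranclp_trans[OF hx rtranclp_sym_gen[OF symR hy]])
  qed
qed

lemma forest_empty: "finite V \<Longrightarrow> forest V {}"
proof -
  assume fin: "finite V"
  have "\<not> is_cycle {} vs" for vs :: "'a list"
  proof
    assume c: "is_cycle {} vs"
    then have "length vs \<ge> 3" unfolding is_cycle_def by blast
    then have "0 < length vs" by linarith
    then show False using cycle_edge_in[OF c, of 0] by simp
  qed
  then show "forest V {}" using fin unfolding forest_def graph_def by simp
qed

lemma exists_fd:
  assumes g: "graph V E"
  shows "\<exists>F W. suitable_fd V E F W"
proof -
  have fin: "finite V" using g unfolding graph_def by simp
  obtain F' where F': "forest V F'" "F' \<subseteq> E" "\<forall>x y. {x, y} \<in> E \<longrightarrow> conn F' x y"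
    using extend_forest[OF graph_finite_E[OF g] forest_empty[OF fin] _ g] by blast
  define W where "W x = {y \<in> V. conn F' x y}" for x
  have gF: "graph V F'" using F'(1) unfolding forest_def by simp
  have bag: "{x \<in> V. u \<in> W x} = {x \<in> V. conn F' x u}" if "u \<in> V" for u
    using that unfolding W_def by auto
  have "suitable_fd V E F' W"
    unfolding suitable_fd_def
  proof (intro conjI ballI)
    show "forest V F'" "F' \<subseteq> E" by (fact F'(1), fact F'(2))
    fix x assume "x \<in> V" then show "W x \<subseteq> V" unfolding W_def by auto
  next
    fix u assume u: "u \<in> V"
    show "{x \<in> V. u \<in> W x} \<noteq> {}" using u by (auto simp: W_def conn_def)
    show "connected_in F' {x \<in> V. u \<in> W x}" using bag[OF u] comp_connected[OF gF] by simp
  next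
    fix e assume e: "e \<in> E"
    obtain a b where ab: "e = {a, b}" "a \<in> V" "b \<in> V"
      using graph_edge_ex[OF g e] by (elim exE conjE) (rule that)
    then have "e \<subseteq> W a" using F'(3) e unfolding W_def by (auto simp: conn_def)
    then show "\<exists>x\<in>V. e \<subseteq> W x" using ab by blast
  next
    fix u assume "u \<in> V" then show "u \<in> W u" unfolding W_def by (simp add: conn_def)
  qed
  then show ?thesis by blast
qed

lemma cmp_witness:
  assumes g: "graph V E"
  shows "\<exists>F W. suitable_fd V E F W \<and> (\<forall>x\<in>V. card (W x) \<le> cmp V E + 1)"
proof (cases "V = {}")
  case True
  then have "E = {}" using graph_edge_ex[OF g] by fast
  then have "suitable_fd V E {} (\<lambda>_. {})"
    using True unfolding suitable_fd_def by (simp add: forest_empty)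
  then show ?thesis using True by blast
next
  case False
  have fin: "finite V" using g unfolding graph_def by simp
  have ex: "\<exists>k. \<exists>F W. suitable_fd V E F W \<and> fd_width V W = k" using exists_fd[OF g] by blast
  have "\<exists>F W. suitable_fd V E F W \<and> fd_width V W = (LEAST k. \<exists>F W. suitable_fd V E F W \<and> fd_width V W = k)"
    using LeastI_ex[OF ex] .
  then obtain F W where FW: "suitable_fd V E F W" "fd_width V W = cmp V E"
    using False unfolding cmp_def by auto
  have "\<forall>x\<in>V. card (W x) \<le> cmp V E + 1"
  proof
    fix x assume x: "x \<in> V"
    have "card (W x) \<le> Max ((\<lambda>x. card (W x)) ` V)" using fin x by simp
    then show "card (W x) \<le> cmp V E + 1" using FW(2) unfolding fd_width_def by linarith
  qed
  then show ?thesis using FW by blast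
qed

lemma graph_induced:
  assumes g: "graph V E" and X: "X \<subseteq> V"
  shows "graph X (induced_edges E X)"
  unfolding graph_def
proof (intro conjI ballI)
  show "finite X" using g X unfolding graph_def by (meson finite_subset)
  fix e assume "e \<in> induced_edges E X"
  then have e: "e \<in> E" "e \<subseteq> X" unfolding induced_edges_def by simp_all
  obtain u v where uv: "u \<noteq> v" "e = {u, v}" "u \<in> V" "v \<in> V"
    using graph_edge_ex[OF g e(1)] by (elim exE conjE) (rule that)
  have "u \<in> X" "v \<in> X" using e(2) uv(2) by simp_all
  then show "\<exists>u v. u \<noteq> v \<and> e = {u, v} \<and> u \<in> X \<and> v \<in> X" using uv by blast
qed

theorem lemma3p2:
  assumes "graph V E"
    and "A \<inter> B = {}"
    and "A \<union> B = V"
  shows "cmp V E \<le> max (cmp A (induced_edges E A)) (cmp B (induced_edges E B))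
                    + card (nbhd V E B)"
proof -
  note g = assms(1) and d = assms(2) and un = assms(3)
  define N where "N = nbhd V E B"
  define EA where "EA = induced_edges E A"
  define EB where "EB = induced_edges E B"
  define M where "M = max (cmp A EA) (cmp B EB)"
  have finV: "finite V" using g unfolding graph_def by simp
  have AV: "A \<subseteq> V" and BV: "B \<subseteq> V" using un by auto
  have NA: "N \<subseteq> A" using un d unfolding N_def nbhd_def by blast
  have finN: "finite N" using finite_subset[OF NA] finite_subset[OF AV finV] by blast
  obtain FA WA where sA: "suitable_fd A EA FA WA" and cA: "\<forall>x\<in>A. card (WA x) \<le> cmp A EA + 1"
    using cmp_witness[OF graph_induced[OF g AV]] unfolding EA_def by blast
  obtain FB WB where sB: "suitable_fd B EB FB WB" and cB: "\<forall>x\<in>B. card (WB x) \<le> cmp B EB + 1"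
    using cmp_witness[OF graph_induced[OF g BV]] unfolding EB_def by blast
  have fA: "forest A FA" and FAE: "FA \<subseteq> EA" and WAs: "\<forall>x\<in>A. WA x \<subseteq> A"
    and bagA: "\<forall>u\<in>A. connected_in FA {x \<in> A. u \<in> WA x}"
    and covA: "\<forall>e\<in>EA. \<exists>x\<in>A. e \<subseteq> WA x" and selfA: "\<forall>u\<in>A. u \<in> WA u"
    using sA unfolding suitable_fd_def by blast+
  have fB: "forest B FB" and FBE: "FB \<subseteq> EB" and WBs: "\<forall>x\<in>B. WB x \<subseteq> B"
    and bagB: "\<forall>u\<in>B. connected_in FB {x \<in> B. u \<in> WB x}"
    and covB: "\<forall>e\<in>EB. \<exists>x\<in>B. e \<subseteq> WB x" and selfB: "\<forall>u\<in>B. u \<in> WB u"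
    using sB unfolding suitable_fd_def by blast+
  have fU: "forest V (FA \<union> FB)" using forest_union[OF fA fB d] un by simp
  have subE: "FA \<union> FB \<subseteq> E" using FAE FBE unfolding EA_def EB_def induced_edges_def by blast
  obtain F' where F': "forest V F'" "FA \<union> FB \<subseteq> F'" "F' \<subseteq> E"
      "\<forall>x y. {x, y} \<in> E \<longrightarrow> conn F' x y"
    using extend_forest[OF graph_finite_E[OF g] fU subE g] by (elim exE conjE) (rule that)
  have gF: "graph V F'" using F'(1) unfolding forest_def by simp
  define W where "W x = (if x \<in> A then WA x else WB x) \<union> (N \<inter> {y \<in> V. conn F' x y})" for x
  have suit: "suitable_fd V E F' W"
    unfolding suitable_fd_def
  proof (intro conjI ballI)
    show "forest V F'" by (fact F'(1))
    show "F' \<subseteq> E" by (fact F'(3))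
  next
    fix x assume "x \<in> V"
    then show "W x \<subseteq> V" unfolding W_def using WAs WBs AV BV un by auto
  next
    fix u assume u: "u \<in> V"
    then show "u \<in> W u" unfolding W_def using selfA selfB un by auto
  next
    fix u assume u: "u \<in> V"
    then have "u \<in> W u" unfolding W_def using selfA selfB un by auto
    then show "{x \<in> V. u \<in> W x} \<noteq> {}" using u by blast
  next
    fix u assume u: "u \<in> V"
    show "connected_in F' {x \<in> V. u \<in> W x}"
    proof (cases "u \<in> N")
      case True
      then have uA: "u \<in> A" using NA by blast
      have "{x \<in> V. u \<in> W x} = {x \<in> V. conn F' x u}"
      proof (intro set_eqI iffI)
        fix x assume "x \<in> {x \<in> V. u \<in> W x}"
        then have x: "x \<in> V" and uw: "u \<in> W x" by simp_all
        have "conn F' x u"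
        proof (cases "x \<in> A")
          case xA: True
          then have "u \<in> WA x \<or> conn F' x u" using uw unfolding W_def by auto
          then show ?thesis
          proof
            assume "u \<in> WA x"
            then have xs: "x \<in> {x \<in> A. u \<in> WA x}" "u \<in> {x \<in> A. u \<in> WA x}" using xA uA selfA by auto
            have cA': "connected_in FA {x \<in> A. u \<in> WA x}" using bagA uA by (rule bspec)
            have "(\<lambda>a b. a \<in> {x \<in> A. u \<in> WA x} \<and> b \<in> {x \<in> A. u \<in> WA x} \<and> {a, b} \<in> FA)\<^sup>*\<^sup>* x u"
              by (rule bspec[OF bspec[OF cA'[unfolded connected_in_def] xs(1)] xs(2)])
            then have "conn FA x u" by (rule restricted_conn)
            moreover have "FA \<subseteq> F'" using F'(2) by simp
            ultimately show ?thesis by (rule conn_mono)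
          qed
        next
          case xB: False
          then have "x \<in> B" using x un by blast
          then have "u \<notin> WB x" using WBs uA d by blast
          then show ?thesis using uw xB unfolding W_def by auto
        qed
        then show "x \<in> {x \<in> V. conn F' x u}" using x by simp
      next
        fix x assume "x \<in> {x \<in> V. conn F' x u}"
        then show "x \<in> {x \<in> V. u \<in> W x}" unfolding W_def using True u by auto
      qed
      then show ?thesis using comp_connected[OF gF] by simp
    next
      case False
      show ?thesis
      proof (cases "u \<in> A")
        case uA: True
        have "{x \<in> V. u \<in> W x} = {x \<in> A. u \<in> WA x}"
        proof (intro set_eqI iffI)
          fix x assume "x \<in> {x \<in> V. u \<in> W x}"
          then have x: "x \<in> V" "u \<in> W x" by simp_all
          show "x \<in> {x \<in> A. u \<in> WA x}"
          proof (cases "x \<in> A")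
            case True then show ?thesis using x False unfolding W_def by auto
          next
            case xB: False
            then have "x \<in> B" using x un by blast
            then have "u \<notin> WB x" using WBs uA d by blast
            then show ?thesis using x xB False unfolding W_def by auto
          qed
        next
          fix x assume "x \<in> {x \<in> A. u \<in> WA x}"
          then show "x \<in> {x \<in> V. u \<in> W x}" unfolding W_def using AV by auto
        qed
        then show ?thesis using connected_in_mono[OF bagA[rule_format, OF uA]] F'(2) by simp
      next
        case uB0: False
        then have uB: "u \<in> B" using u un by blast
        have "{x \<in> V. u \<in> W x} = {x \<in> B. u \<in> WB x}"
        proof (intro set_eqI iffI)
          fix x assume "x \<in> {x \<in> V. u \<in> W x}"
          then have x: "x \<in> V" "u \<in> W x" by simp_all
          show "x \<in> {x \<in> B. u \<in> WB x}"
          proof (cases "x \<in> A")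
            case True
            then have "u \<notin> WA x" using WAs uB0 by blast
            then show ?thesis using x True False unfolding W_def by auto
          next
            case xB: False
            then have "x \<in> B" using x un by blast
            then show ?thesis using x xB False unfolding W_def by auto
          qed
        next
          fix x assume x: "x \<in> {x \<in> B. u \<in> WB x}"
          then have "x \<notin> A" using d by blast
          then show "x \<in> {x \<in> V. u \<in> W x}" using x unfolding W_def using BV by auto
        qed
        then show ?thesis using connected_in_mono[OF bagB[rule_format, OF uB]] F'(2) by simp
      qed
    qed
  next
    fix e assume e: "e \<in> E"
    obtain a b where ab: "e = {a, b}" "a \<in> V" "b \<in> V"
      using graph_edge_ex[OF g e] by (elim exE conjE) (rule that)
    have cross: "\<exists>x\<in>V. {p, q} \<subseteq> W x" if pq: "{p, q} \<in> E" "p \<in> A" "q \<in> B" for p q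
    proof -
      have qA: "q \<notin> A" using pq d by blast
      have qp: "{q, p} \<in> E" using pq(1) by (simp add: insert_commute)
      have pV: "p \<in> V - B" using pq(2) d AV by blast
      have pN: "p \<in> N" unfolding N_def nbhd_def using pV pq(3) qp by blast
      have "conn F' q p" using F'(4) qp by blast
      then have "p \<in> W q" using pN NA AV unfolding W_def by auto
      moreover have "q \<in> W q" using selfB pq(3) qA unfolding W_def by auto
      ultimately show ?thesis using pq(3) BV by blast
    qed
    show "\<exists>x\<in>V. e \<subseteq> W x"
    proof (cases "a \<in> A")
      case aA: True
      show ?thesis
      proof (cases "b \<in> A")
        case True
        then have "e \<in> EA" using e aA ab unfolding EA_def induced_edges_def by simp
        then obtain x where x: "x \<in> A" "e \<subseteq> WA x" using covA by blast
        then have "e \<subseteq> W x" unfolding W_def by auto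
        then show ?thesis using x AV by blast
      next
        case False
        then have "b \<in> B" using ab un by blast
        then show ?thesis using cross[of a b] e ab aA by simp
      qed
    next
      case aB0: False
      then have aB: "a \<in> B" using ab un by blast
      show ?thesis
      proof (cases "b \<in> A")
        case True
        have "{b, a} \<in> E" using e ab by (simp add: insert_commute)
        then show ?thesis using cross[of b a] ab True aB by (simp add: insert_commute)
      next
        case False
        then have "b \<in> B" using ab un by blast
        then have "e \<in> EB" using e aB ab unfolding EB_def induced_edges_def by simp
        then obtain x where x: "x \<in> B" "e \<subseteq> WB x" using covB by blast
        then have "x \<notin> A" using d by blast
        then have "e \<subseteq> W x" using x unfolding W_def by auto
        then show ?thesis using x BV by blast
      qed
    qed
  qed
  have cardW: "card (W x) \<le> M + 1 + card N" if x: "x \<in> V" for x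
  proof -
    have "card (W x) \<le> card (if x \<in> A then WA x else WB x) + card (N \<inter> {y \<in> V. conn F' x y})"
      unfolding W_def by (rule card_Un_le)
    moreover have "card (N \<inter> {y \<in> V. conn F' x y}) \<le> card N" using finN by (intro card_mono) auto
    moreover have "card (if x \<in> A then WA x else WB x) \<le> M + 1"
    proof (cases "x \<in> A")
      case True
      then have "card (WA x) \<le> cmp A EA + 1" using cA by blast
      then show ?thesis using True unfolding M_def by simp
    next
      case False then have "x \<in> B" using x un by blast
      then have "card (WB x) \<le> cmp B EB + 1" using cB by blast
      then show ?thesis using False unfolding M_def by simp
    qed
    ultimately show ?thesis by linarith
  qed
  show ?thesis
  proof (cases "V = {}")
    case True then show ?thesis unfolding cmp_def by simp
  next
    case False
    have "(LEAST k. \<exists>EF W'. suitable_fd V E EF W' \<and> fd_width V W' = k) \<le> fd_width V W"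
      by (rule Least_le) (use suit in blast)
    then have c1: "cmp V E \<le> fd_width V W" unfolding cmp_def using False by simp
    have "\<forall>y\<in>(\<lambda>x. card (W x)) ` V. y \<le> M + 1 + card N" using cardW by blast
    then have "Max ((\<lambda>x. card (W x)) ` V) \<le> M + 1 + card N"
      using finV False by (subst Max_le_iff) auto
    then have "fd_width V W \<le> M + card N" unfolding fd_width_def by linarith
    then show ?thesis using c1 unfolding M_def EA_def EB_def N_def by linarith
  qed
qed

end
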